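(* Let $G=\bigoplus_{n=2}^\infty\mathbb Z/n$. There is a proper, left-invariant metric $d_G$ on $G$ such that $\operatorname{l\text{-}asdim}(G,d_G)>0=\operatorname{asdim}(G,d_G)$.
   Context: For a metric space $X$: $\operatorname{asdim}(X)\le n$ iff for every $r>0$ there are $D<\infty$ and families $\mathcal U_1,\dots,\mathcal U_{n+1}$ of subsets covering $X$, each $r$-disjoint (points in different members of the same family at distance $\ge r$), with members of diameter $\le D$. $\operatorname{l\text{-}asdim}(X)\le n$ (linearly controlled asymptotic dimension) iff there are $c>0$ and an unbounded set $U\subset\mathbb R_+$ such that for every $r\in U$ there are families $\mathcal U_1,\dots,\mathcal U_{n+1}$ covering $X$, each $r$-disjoint, with members of diameter $\le cr$. A metric is proper if bounded sets are finite (closed balls are compact). *)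

theory Defs
  imports Complex_Main
begin

text \<open>The group G = direct sum over n >= 2 of Z/n, represented as finitely
supported functions g :: nat => int with g n in {0..n-1} for n >= 2 and
g 0 = g 1 = 0; addition is coordinatewise modulo n.\<close>

definition dsumG :: "(nat \<Rightarrow> int) set" where
  "dsumG = {g. finite {n. g n \<noteq> 0} \<and> g 0 = 0 \<and> g 1 = 0 \<and>
              (\<forall>n\<ge>2. 0 \<le> g n \<and> g n < int n)}"

definition dsumG_add :: "(nat \<Rightarrow> int) \<Rightarrow> (nat \<Rightarrow> int) \<Rightarrow> (nat \<Rightarrow> int)" where
  "dsumG_add g h = (\<lambda>n. (g n + h n) mod int n)"

definition is_metric_on :: "'a set \<Rightarrow> ('a \<Rightarrow> 'a \<Rightarrow> real) \<Rightarrow> bool" where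
  "is_metric_on X d \<longleftrightarrow>
     (\<forall>x\<in>X. \<forall>y\<in>X. 0 \<le> d x y \<and> (d x y = 0 \<longleftrightarrow> x = y) \<and> d x y = d y x) \<and>
     (\<forall>x\<in>X. \<forall>y\<in>X. \<forall>z\<in>X. d x z \<le> d x y + d y z)"

definition proper_metric_on :: "'a set \<Rightarrow> ('a \<Rightarrow> 'a \<Rightarrow> real) \<Rightarrow> bool" where
  "proper_metric_on X d \<longleftrightarrow> (\<forall>x\<in>X. \<forall>R. finite {y\<in>X. d x y \<le> R})"

definition r_disjoint :: "('a \<Rightarrow> 'a \<Rightarrow> real) \<Rightarrow> real \<Rightarrow> 'a set set \<Rightarrow> bool" where
  "r_disjoint d r \<U> \<longleftrightarrow>
     (\<forall>A\<in>\<U>. \<forall>B\<in>\<U>. A \<noteq> B \<longrightarrow> (\<forall>x\<in>A. \<forall>y\<in>B. r \<le> d x y))"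

definition diam_bounded :: "('a \<Rightarrow> 'a \<Rightarrow> real) \<Rightarrow> real \<Rightarrow> 'a set set \<Rightarrow> bool" where
  "diam_bounded d D \<U> \<longleftrightarrow> (\<forall>A\<in>\<U>. \<forall>x\<in>A. \<forall>y\<in>A. d x y \<le> D)"

definition good_cover :: "'a set \<Rightarrow> ('a \<Rightarrow> 'a \<Rightarrow> real) \<Rightarrow> nat \<Rightarrow> real \<Rightarrow> real \<Rightarrow> bool" where
  "good_cover X d n r D \<longleftrightarrow>
     (\<exists>\<U> :: nat \<Rightarrow> 'a set set.
        (\<forall>i\<le>n. (\<forall>A\<in>\<U> i. A \<subseteq> X) \<and> r_disjoint d r (\<U> i) \<and> diam_bounded d D (\<U> i)) \<and>
        X \<subseteq> (\<Union>i\<le>n. \<Union>(\<U> i)))"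

definition asdim_le :: "'a set \<Rightarrow> ('a \<Rightarrow> 'a \<Rightarrow> real) \<Rightarrow> nat \<Rightarrow> bool" where
  "asdim_le X d n \<longleftrightarrow> (\<forall>r>0. \<exists>D. good_cover X d n r D)"

definition lasdim_le :: "'a set \<Rightarrow> ('a \<Rightarrow> 'a \<Rightarrow> real) \<Rightarrow> nat \<Rightarrow> bool" where
  "lasdim_le X d n \<longleftrightarrow>
     (\<exists>c>0. \<exists>U::real set. U \<subseteq> {0<..} \<and> (\<forall>M. \<exists>r\<in>U. M < r) \<and>
        (\<forall>r\<in>U. good_cover X d n r (c * r)))"

end

theory Submission
  imports Defs "HOL-Library.FuncSet"
begin

definition dd :: "(nat \<Rightarrow> int) \<Rightarrow> (nat \<Rightarrow> int) \<Rightarrow> real" where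
  "dd x y = (\<Sum>n\<in>{n. x n \<noteq> y n}. real n)"

lemma memG: "g \<in> dsumG \<Longrightarrow> finite {n. g n \<noteq> 0} \<and> g 0 = 0 \<and> g 1 = 0 \<and> (\<forall>n\<ge>2. 0 \<le> g n \<and> g n < int n)"
  by (simp add: dsumG_def)

lemma finS: "x \<in> dsumG \<Longrightarrow> y \<in> dsumG \<Longrightarrow> finite {n. x n \<noteq> y n}"
proof -
  assume a: "x \<in> dsumG" "y \<in> dsumG"
  have "{n. x n \<noteq> y n} \<subseteq> {n. x n \<noteq> 0} \<union> {n. y n \<noteq> 0}" by auto
  then show ?thesis using memG[OF a(1)] memG[OF a(2)] by (meson finite_Un finite_subset)
qed

lemma dd_nonneg: "0 \<le> dd x y"
  unfolding dd_def by (simp add: sum_nonneg)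

lemma dd_ge: "x \<in> dsumG \<Longrightarrow> y \<in> dsumG \<Longrightarrow> x n \<noteq> y n \<Longrightarrow> real n \<le> dd x y"
  unfolding dd_def by (rule member_le_sum) (auto simp: finS)

lemma dd_le: "x \<in> dsumG \<Longrightarrow> y \<in> dsumG \<Longrightarrow> {n. x n \<noteq> y n} \<subseteq> T \<Longrightarrow> finite T \<Longrightarrow> dd x y \<le> (\<Sum>n\<in>T. real n)"
  unfolding dd_def by (rule sum_mono2) auto

lemma dd_sym: "dd x y = dd y x"
  unfolding dd_def by (metis (mono_tags, lifting) Collect_cong)

lemma diff_ge2: "x \<in> dsumG \<Longrightarrow> y \<in> dsumG \<Longrightarrow> x n \<noteq> y n \<Longrightarrow> n \<ge> 2"
  using memG[of x] memG[of y] by (cases n; cases "n - 1"; auto)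

lemma dd_zero: "x \<in> dsumG \<Longrightarrow> y \<in> dsumG \<Longrightarrow> dd x y = 0 \<longleftrightarrow> x = y"
proof
  assume a: "x \<in> dsumG" "y \<in> dsumG" "dd x y = 0"
  show "x = y"
  proof (rule ccontr)
    assume "x \<noteq> y"
    then obtain n where n: "x n \<noteq> y n" by auto
    have "real n \<le> dd x y" using dd_ge[OF a(1,2) n] .
    moreover have "n \<ge> 2" using diff_ge2[OF a(1,2) n] .
    ultimately show False using a(3) by simp
  qed
qed (simp add: dd_def)

lemma dd_tri: "x \<in> dsumG \<Longrightarrow> y \<in> dsumG \<Longrightarrow> z \<in> dsumG \<Longrightarrow> dd x z \<le> dd x y + dd y z"
proof -
  assume a: "x \<in> dsumG" "y \<in> dsumG" "z \<in> dsumG"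
  let ?A = "{n. x n \<noteq> y n}" and ?B = "{n. y n \<noteq> z n}"
  have f: "finite ?A" "finite ?B" using finS a by auto
  have "dd x z \<le> (\<Sum>n\<in>?A \<union> ?B. real n)"
    by (rule dd_le[OF a(1,3)]) (use f in auto)
  also have "\<dots> \<le> (\<Sum>n\<in>?A. real n) + (\<Sum>n\<in>?B. real n)"
  proof -
    have "0 \<le> (\<Sum>n\<in>?A \<inter> ?B. real n)" by (simp add: sum_nonneg)
    then show ?thesis using sum.union_inter[OF f, of real] by linarith
  qed
  finally show ?thesis by (simp add: dd_def)
qed

lemma mod_triv: "g \<in> dsumG \<Longrightarrow> n \<ge> 2 \<Longrightarrow> g n mod int n = g n"
  using memG[of g] by simp

lemma add_S: "g \<in> dsumG \<Longrightarrow> x \<in> dsumG \<Longrightarrow> y \<in> dsumG \<Longrightarrow>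
   {n. dsumG_add g x n \<noteq> dsumG_add g y n} = {n. x n \<noteq> y n}"
proof (rule Collect_cong)
  fix n assume a: "g \<in> dsumG" "x \<in> dsumG" "y \<in> dsumG"
  show "(dsumG_add g x n \<noteq> dsumG_add g y n) = (x n \<noteq> y n)"
  proof (cases "n \<ge> 2")
    case True
    have "(g n + x n) mod int n = (g n + y n) mod int n \<longleftrightarrow> x n mod int n = y n mod int n"
      by (metis minus_add_cancel mod_add_right_eq)
    then show ?thesis unfolding dsumG_add_def using mod_triv[OF a(2) True] mod_triv[OF a(3) True] by simp
  next
    case False
    then have "n = 0 \<or> n = 1" by auto
    then show ?thesis using memG[OF a(2)] memG[OF a(3)] memG[OF a(1)] unfolding dsumG_add_def by auto
  qed
qed

lemma proper: "x \<in> dsumG \<Longrightarrow> finite {y\<in>dsumG. dd x y \<le> R}"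
proof -
  assume x: "x \<in> dsumG"
  define N where "N = nat \<lceil>R\<rceil>"
  let ?Y = "{y\<in>dsumG. dd x y \<le> R}"
  have sub: "(\<lambda>y. restrict y {..N}) ` ?Y \<subseteq> PiE {..N} (\<lambda>_. {0..int N})"
  proof
    fix f assume "f \<in> (\<lambda>y. restrict y {..N}) ` ?Y"
    then obtain y where y: "y \<in> dsumG" "dd x y \<le> R" and f: "f = restrict y {..N}" by auto
    have "0 \<le> y n \<and> y n \<le> int N" if "n \<le> N" for n
    proof (cases "n \<ge> 2")
      case True then show ?thesis using memG[OF y(1)] that by force
    next
      case False then have "n = 0 \<or> n = 1" by auto
      then show ?thesis using memG[OF y(1)] by auto
    qed
    then show "f \<in> PiE {..N} (\<lambda>_. {0..int N})" using f by auto
  qed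
  have inj: "inj_on (\<lambda>y. restrict y {..N}) ?Y"
  proof
    fix y z assume y: "y \<in> ?Y" and z: "z \<in> ?Y" and e: "restrict y {..N} = restrict z {..N}"
    have "y n = z n" for n
    proof (cases "n \<le> N")
      case True then show ?thesis using fun_cong[OF e, of n] by simp
    next
      case False
      have "y n = x n"
      proof (rule ccontr)
        assume "y n \<noteq> x n"
        then have "real n \<le> dd x y" using dd_ge[OF x, of y n] y by auto
        then have "real n \<le> R" using y by auto
        then show False using False unfolding N_def by linarith
      qed
      moreover have "z n = x n"
      proof (rule ccontr)
        assume "z n \<noteq> x n"
        then have "real n \<le> dd x z" using dd_ge[OF x, of z n] z by auto
        then have "real n \<le> R" using z by auto
        then show False using False unfolding N_def by linarith
      qed
      ultimately show ?thesis by simp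
    qed
    then show "y = z" by auto
  qed
  have "finite ((\<lambda>y. restrict y {..N}) ` ?Y)"
    by (rule finite_subset[OF sub]) (simp add: finite_PiE)
  then show ?thesis using finite_imageD[OF _ inj] by blast
qed


lemma asdim: "asdim_le dsumG dd 0"
  unfolding asdim_le_def
proof (intro allI impI)
  fix r :: real assume "r > 0"
  define K where "K = nat \<lceil>r\<rceil>"
  define cls where "cls x = {y\<in>dsumG. \<forall>n>K. y n = x n}" for x :: "nat \<Rightarrow> int"
  define D where "D = (\<Sum>n\<in>{..K}. real n)"
  have sub: "\<forall>A\<in>cls ` dsumG. A \<subseteq> dsumG" unfolding cls_def by auto
  have disj: "r_disjoint dd r (cls ` dsumG)"
    unfolding r_disjoint_def
  proof (intro ballI impI)
    fix A B a b assume A: "A \<in> cls ` dsumG" and B: "B \<in> cls ` dsumG" and ne: "A \<noteq> B"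
      and a: "a \<in> A" and b: "b \<in> B"
    obtain x where x: "A = cls x" using A by auto
    obtain z where z: "B = cls z" using B by auto
    have aG: "a \<in> dsumG" and bG: "b \<in> dsumG" using a b x z unfolding cls_def by auto
    have "\<exists>n>K. a n \<noteq> b n"
    proof (rule ccontr)
      assume "\<not> ?thesis"
      then have "\<forall>n>K. x n = z n" using a b x z unfolding cls_def by force
      then have "cls x = cls z" unfolding cls_def by auto
      then show False using ne x z by simp
    qed
    then obtain n where n: "n > K" "a n \<noteq> b n" by auto
    have "real n \<le> dd a b" using dd_ge[OF aG bG n(2)] .
    moreover have "r \<le> real n" using n(1) unfolding K_def by linarith
    ultimately show "r \<le> dd a b" by simp
  qed
  have diam: "diam_bounded dd D (cls ` dsumG)"
    unfolding diam_bounded_def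
  proof (intro ballI)
    fix A a b assume A: "A \<in> cls ` dsumG" and a: "a \<in> A" and b: "b \<in> A"
    obtain x where x: "A = cls x" using A by auto
    have aG: "a \<in> dsumG" and bG: "b \<in> dsumG" using a b x unfolding cls_def by auto
    have "{n. a n \<noteq> b n} \<subseteq> {..K}"
    proof
      fix n assume "n \<in> {n. a n \<noteq> b n}"
      then show "n \<in> {..K}" using a b x unfolding cls_def by (cases "n \<le> K") auto
    qed
    then show "dd a b \<le> D" unfolding D_def by (rule dd_le[OF aG bG]) simp
  qed
  have cov: "dsumG \<subseteq> \<Union> (cls ` dsumG)" unfolding cls_def by auto
  show "\<exists>D. good_cover dsumG dd 0 r D"
    unfolding good_cover_def
    by (rule exI[of _ D], rule exI[of _ "\<lambda>_. cls ` dsumG"]) (use sub disj diam cov in auto)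
qed

definition yy :: "nat \<Rightarrow> nat \<Rightarrow> int" where
  "yy j = (\<lambda>n. if 2 \<le> n \<and> n \<le> j then 1 else 0)"

lemma yy_G: "yy j \<in> dsumG"
proof -
  have "{n. yy j n \<noteq> 0} \<subseteq> {..j}" unfolding yy_def by auto
  then have "finite {n. yy j n \<noteq> 0}" using finite_subset by blast
  then show ?thesis unfolding dsumG_def yy_def by auto
qed

lemma yy_step: "dd (yy j) (yy (Suc j)) \<le> real (Suc j)"
proof -
  have "{n. yy j n \<noteq> yy (Suc j) n} \<subseteq> {Suc j}" unfolding yy_def by auto
  from dd_le[OF yy_G yy_G this] show ?thesis by simp
qed

lemma yy_far: "dd (yy 0) (yy K) = (\<Sum>n\<in>{2..K}. real n)"
proof -
  have "{n. yy 0 n \<noteq> yy K n} = {2..K}" unfolding yy_def by auto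
  then show ?thesis unfolding dd_def by simp
qed

lemma gauss_low: "real K * (real K + 1) / 2 \<le> 1 + (\<Sum>n\<in>{2..K}. real n)"
proof -
  have g: "2 * (\<Sum>n\<in>{Suc 0..m}. real n) = real m * (real m + 1)" for m
    by (induction m) (simp_all add: algebra_simps)
  have "real K * (real K + 1) / 2 = (\<Sum>n\<in>{Suc 0..K}. real n)"
    using g[of K] by simp
  also have "\<dots> \<le> (\<Sum>n\<in>insert 1 {2..K}. real n)"
    by (rule sum_mono2) auto
  also have "\<dots> = 1 + (\<Sum>n\<in>{2..K}. real n)" by simp
  finally show ?thesis .
qed

lemma not_lasdim: "\<not> lasdim_le dsumG dd 0"
proof
  assume "lasdim_le dsumG dd 0"
  then obtain c U where c: "c > 0" and U: "U \<subseteq> {0<..}" and unb: "\<forall>M. \<exists>r\<in>U. M < r"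
    and gc: "\<forall>r\<in>U. good_cover dsumG dd 0 r (c * r)"
    unfolding lasdim_le_def by blast
  obtain r where r: "r \<in> U" "2 * c + 3 < r" using unb by blast
  obtain \<U> where U0: "r_disjoint dd r (\<U> 0)" "diam_bounded dd (c * r) (\<U> 0)"
     and cov: "dsumG \<subseteq> \<Union> (\<U> 0)"
    using gc r(1) unfolding good_cover_def by auto
  define K where "K = nat \<lceil>r\<rceil> - 1"
  have K1: "real K < r" "r - 1 \<le> real K" using r c unfolding K_def by linarith+
  obtain A where A: "A \<in> \<U> 0" "yy 0 \<in> A" using cov yy_G by blast
  have chain: "j \<le> K \<Longrightarrow> yy j \<in> A" for j
  proof (induction j)
    case 0 then show ?case using A by simp
  next
    case (Suc j)
    then have IH: "yy j \<in> A" by simp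
    obtain B where B: "B \<in> \<U> 0" "yy (Suc j) \<in> B" using cov yy_G by blast
    show ?case
    proof (rule ccontr)
      assume "yy (Suc j) \<notin> A"
      then have "A \<noteq> B" using B by auto
      then have "r \<le> dd (yy j) (yy (Suc j))" using U0(1) A(1) B IH unfolding r_disjoint_def by blast
      moreover have "real (Suc j) \<le> real K" using Suc.prems by simp
      ultimately show False using yy_step[of j] K1 by linarith
    qed
  qed
  have "dd (yy 0) (yy K) \<le> c * r" using U0(2) A chain[of K] unfolding diam_bounded_def by blast
  then have le: "real K * (real K + 1) / 2 \<le> 1 + c * r" using yy_far[of K] gauss_low[of K] by linarith
  have "(2 * c + 2) * r \<le> real K * (real K + 1)"
    by (rule mult_mono) (use K1 c r in auto)
  moreover have "(2 * c + 2) * r = 2 * ((c + 1) * r)" by (simp add: algebra_simps)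
  ultimately have "(c + 1) * r \<le> 1 + c * r" using le by linarith
  moreover have "(c + 1) * r = c * r + r" by (simp add: algebra_simps)
  ultimately show False using r c by linarith
qed

theorem mainTheorem16:
  shows "\<exists>d :: (nat \<Rightarrow> int) \<Rightarrow> (nat \<Rightarrow> int) \<Rightarrow> real.
           is_metric_on dsumG d \<and> proper_metric_on dsumG d \<and>
           (\<forall>g\<in>dsumG. \<forall>x\<in>dsumG. \<forall>y\<in>dsumG. d (dsumG_add g x) (dsumG_add g y) = d x y) \<and>
           asdim_le dsumG d 0 \<and> \<not> lasdim_le dsumG d 0"
proof (intro exI[of _ dd] conjI)
  show "is_metric_on dsumG dd"
    unfolding is_metric_on_def
  proof (intro conjI ballI)
    fix x y assume "x \<in> dsumG" "y \<in> dsumG"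
    then show "0 \<le> dd x y" "(dd x y = 0) = (x = y)" "dd x y = dd y x"
      using dd_nonneg dd_zero dd_sym by auto
  next
    fix x y z assume "x \<in> dsumG" "y \<in> dsumG" "z \<in> dsumG"
    then show "dd x z \<le> dd x y + dd y z" by (rule dd_tri)
  qed
  show "proper_metric_on dsumG dd"
    unfolding proper_metric_on_def using proper by blast
  show "\<forall>g\<in>dsumG. \<forall>x\<in>dsumG. \<forall>y\<in>dsumG. dd (dsumG_add g x) (dsumG_add g y) = dd x y"
    unfolding dd_def using add_S by simp
  show "asdim_le dsumG dd 0" by (rule asdim)
  show "\<not> lasdim_le dsumG dd 0" by (rule not_lasdim)
qed

end
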